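(* For $n\ge1$ let $\psi_n(x)=\sum_{i\in\mathbb Z}\phi_n(x-i)^2$, $x\in\mathbb R$, where $\phi_n$ is the basic limit function of $S_n$. Then $\psi_n$ is positive, symmetric ($\psi_n(-x)=\psi_n(x)$), and periodic with period $1$. Moreover $\int_0^1\psi_n(x)\,dx$ is of order $1/n$, i.e. $\int_0^1\psi_n(x)\,dx\sim 1/n$, and there is a real constant $C$, independent of $n$, such that $\|\psi_n\|_\infty\le C/n$ for all $n\ge1$.
   Context: For an integer $n\ge1$, the subdivision scheme $S_n$ acts on real sequences $\mathbf f^k=(f^k_i)_{i\in\mathbb Z}$ (the value $f^k_i$ being associated with the dyadic point $2^{-k}i$) by the refinement rules $$f^{k+1}_{2i}=\frac1{2n-1}\sum_{j=-n+1}^{n-1}f^k_{i+j},\qquad f^{k+1}_{2i+1}=\frac1{2n}\sum_{j=-n+1}^{n}f^k_{i+j}.$$ This scheme is convergent (for bounded initial data the values $f^k_i$ converge uniformly to $F(2^{-k}i)$ for a continuous $F$). The basic limit function $\phi_n$ is the limit function generated from $\delta$ ($\delta_0=1$, $\delta_i=0$ otherwise); it is continuous and supported in $[-2n+1,2n-1]$, so the sum defining $\psi_n$ is finite. *)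

theory Defs
  imports "HOL-Analysis.Analysis"
begin

definition refine :: "nat \<Rightarrow> (int \<Rightarrow> real) \<Rightarrow> (int \<Rightarrow> real)" where
  "refine n f m =
     (let i = m div 2 in
      if even m
      then (1 / (2 * real n - 1)) * (\<Sum>j = - int n + 1 .. int n - 1. f (i + j))
      else (1 / (2 * real n)) * (\<Sum>j = - int n + 1 .. int n. f (i + j)))"

definition delta :: "int \<Rightarrow> real" where
  "delta i = (if i = 0 then 1 else 0)"

definition sub_delta :: "nat \<Rightarrow> nat \<Rightarrow> int \<Rightarrow> real" where
  "sub_delta n k = (refine n ^^ k) delta"

definition is_limit_function :: "(nat \<Rightarrow> int \<Rightarrow> real) \<Rightarrow> (real \<Rightarrow> real) \<Rightarrow> bool" where
  "is_limit_function f F \<longleftrightarrow> continuous_on UNIV F \<and>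
     (\<forall>e>0. \<forall>\<^sub>F k in sequentially. \<forall>i. \<bar>f k i - F (real_of_int i / 2 ^ k)\<bar> < e)"

definition phi :: "nat \<Rightarrow> real \<Rightarrow> real" where
  "phi n = (THE F. is_limit_function (sub_delta n) F)"

definition psi :: "nat \<Rightarrow> real \<Rightarrow> real" where
  "psi n x = (\<Sum>\<^sub>\<infinity> i::int. (phi n (x - real_of_int i))\<^sup>2)"

end

theory Submission
  imports Defs
begin

lemma sum_int_shift: "(\<Sum>j = a..a + int N - 1. h j) = (\<Sum>t<N. h (a + int t))"
proof (induction N)
  case 0 then show ?case by simp
next
  case (Suc N)
  have "{a..a + int (Suc N) - 1} = insert (a + int N) {a..a + int N - 1}" by auto
  then show ?case using Suc by (simp add: add.commute)
qed

lemma refine_even: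
  assumes "n \<ge> 1"
  shows "refine n f (2*i) = (1 / real (2*n-1)) * (\<Sum>t<2*n-1. f (i - int n + 1 + int t))"
proof -
  have "(\<Sum>j = - int n + 1 .. int n - 1. f (i + j)) = (\<Sum>j = (- int n + 1) .. (- int n + 1) + int (2*n-1) - 1. f (i + j))"
    using assms by (simp add: of_nat_diff)
  also have "\<dots> = (\<Sum>t<2*n-1. f (i - int n + 1 + int t))" by (subst sum_int_shift) (simp add: algebra_simps)
  finally show ?thesis using assms by (simp add: refine_def of_nat_diff)
qed

lemma refine_odd:
  assumes "n \<ge> 1"
  shows "refine n f (2*i+1) = (1 / real (2*n)) * (\<Sum>t<2*n. f (i - int n + 1 + int t))"
proof -
  have "(\<Sum>j = - int n + 1 .. int n. f (i + j)) = (\<Sum>j = (- int n + 1) .. (- int n + 1) + int (2*n) - 1. f (i + j))"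
    using assms by simp
  also have "\<dots> = (\<Sum>t<2*n. f (i - int n + 1 + int t))" by (subst sum_int_shift) (simp add: algebra_simps)
  finally show ?thesis using assms by (simp add: refine_def)
qed

lemma lip_int:
  assumes "\<forall>i. \<bar>f (i+1) - f i\<bar> \<le> (d::real)"
  shows "\<bar>f b - f a\<bar> \<le> real_of_int \<bar>b - a\<bar> * d"
proof -
  have *: "\<bar>f (a + int k) - f a\<bar> \<le> real k * d" for a k
  proof (induction k)
    case 0 then show ?case by simp
  next
    case (Suc k)
    have "\<bar>f (a + int (Suc k)) - f a\<bar> \<le> \<bar>f (a + int k + 1) - f (a + int k)\<bar> + \<bar>f (a + int k) - f a\<bar>"
      by (smt (verit) add.assoc of_nat_Suc)
    also have "\<dots> \<le> d + real k * d" using Suc assms by (meson add_mono)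
    finally show ?case by (simp add: algebra_simps)
  qed
  show ?thesis
  proof (cases "a \<le> b")
    case True
    then have "b = a + int (nat (b - a))" by simp
    then show ?thesis using *[of a "nat (b-a)"] True by (metis abs_of_nonneg diff_ge_0_iff_ge of_int_of_nat_eq of_nat_0_le_iff int_nat_eq) 
  next
    case False
    then have "a = b + int (nat (a - b))" by simp
    then show ?thesis using *[of b "nat (a-b)"] False
      by (smt (verit, ccfv_SIG) abs_minus_commute int_nat_eq of_int_of_nat_eq)
  qed
qed

lemma sum_real_lt: "(\<Sum>t<N. real t) = real N * (real N - 1) / 2"
  by (induction N) (auto simp: algebra_simps)

lemma gauss1: "(\<Sum>t<N. (real N - real t) * d) = d * (real N * (real N + 1) / 2)"
proof -
  have a: "(\<Sum>t<N. (real N - real t) * d) = (\<Sum>t<N. real N - real t) * d" by (simp add: sum_distrib_right)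
  have b: "(\<Sum>t<N. real N - real t) = real N * real N - real N * (real N - 1) / 2"
    by (simp add: sum_subtractf sum_real_lt)
  show ?thesis unfolding a b by (simp add: field_simps)
qed

lemma gauss2: "(\<Sum>t<N. (real t + 1) * d) = d * (real N * (real N + 1) / 2)"
proof -
  have a: "(\<Sum>t<N. (real t + 1) * d) = (\<Sum>t<N. real t + 1) * d" by (simp add: sum_distrib_right)
  have b: "(\<Sum>t<N. real t + 1) = real N * (real N - 1) / 2 + real N"
    by (simp add: sum.distrib sum_real_lt)
  show ?thesis unfolding a b by (simp add: field_simps)
qed

lemma avg1:
  fixes g :: "nat \<Rightarrow> real"
  assumes N: "N > 0" and L: "\<And>s t. \<bar>g s - g t\<bar> \<le> \<bar>real s - real t\<bar> * d"
  shows "\<bar>(1 / real (N+1)) * (\<Sum>t<N+1. g t) - (1 / real N) * (\<Sum>t<N. g t)\<bar> \<le> d / 2"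
proof -
  define S where "S = (\<Sum>t<N. g t)"
  have e: "(1 / real (N+1)) * (\<Sum>t<N+1. g t) - (1 / real N) * (\<Sum>t<N. g t)
      = (real N * g N - S) / (real N * (real N + 1))"
    using N by (simp add: S_def field_simps)
  have e2: "real N * g N - S = (\<Sum>t<N. g N - g t)" by (simp add: S_def sum_subtractf)
  have "\<bar>\<Sum>t<N. g N - g t\<bar> \<le> (\<Sum>t<N. \<bar>g N - g t\<bar>)" by (rule sum_abs)
  also have "\<dots> \<le> (\<Sum>t<N. (real N - real t) * d)"
  proof (rule sum_mono)
    fix t assume "t \<in> {..<N}"
    then have "\<bar>real N - real t\<bar> = real N - real t" by simp
    then show "\<bar>g N - g t\<bar> \<le> (real N - real t) * d" using L[of N t] by simp
  qed
  also have "\<dots> = d * (real N * (real N + 1) / 2)" by (rule gauss1)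
  finally have b: "\<bar>real N * g N - S\<bar> \<le> d * (real N * (real N + 1) / 2)" using e2 by simp
  have p: "real N * (real N + 1) > 0" using N by simp
  show ?thesis unfolding e using b p by (simp add: abs_divide divide_le_eq)
qed

lemma avg2:
  fixes g :: "nat \<Rightarrow> real"
  assumes N: "N > 0" and L: "\<And>s t. \<bar>g s - g t\<bar> \<le> \<bar>real s - real t\<bar> * d"
  shows "\<bar>(1 / real N) * (\<Sum>t<N. g (t+1)) - (1 / real (N+1)) * (\<Sum>t<N+1. g t)\<bar> \<le> d / 2"
proof -
  define S where "S = (\<Sum>t<N. g (t+1))"
  have s: "(\<Sum>t<N+1. g t) = g 0 + S" unfolding S_def by (simp only: Suc_eq_plus1[symmetric] sum.lessThan_Suc_shift)
  have e: "(1 / real N) * (\<Sum>t<N. g (t+1)) - (1 / real (N+1)) * (\<Sum>t<N+1. g t)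
      = (S - real N * g 0) / (real N * (real N + 1))"
    using N unfolding s by (simp add: S_def field_simps)
  have e2: "S - real N * g 0 = (\<Sum>t<N. g (t+1) - g 0)" by (simp add: S_def sum_subtractf)
  have "\<bar>\<Sum>t<N. g (t+1) - g 0\<bar> \<le> (\<Sum>t<N. \<bar>g (t+1) - g 0\<bar>)" by (rule sum_abs)
  also have "\<dots> \<le> (\<Sum>t<N. (real t + 1) * d)"
  proof (rule sum_mono)
    fix t assume "t \<in> {..<N}"
    have "\<bar>real (t+1) - real 0\<bar> = real t + 1" by simp
    then show "\<bar>g (t+1) - g 0\<bar> \<le> (real t + 1) * d" using L[of "t+1" 0] by (simp add: add.commute)
  qed
  also have "\<dots> = d * (real N * (real N + 1) / 2)" by (rule gauss2)
  finally have b: "\<bar>S - real N * g 0\<bar> \<le> d * (real N * (real N + 1) / 2)" using e2 by simp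
  have p: "real N * (real N + 1) > 0" using N by simp
  show ?thesis unfolding e using b p by (simp add: abs_divide divide_le_eq)
qed

lemma avg_close:
  fixes h :: "nat \<Rightarrow> real"
  assumes K: "K > 0" and b: "\<And>t. t < K \<Longrightarrow> \<bar>h t - c\<bar> \<le> B"
  shows "\<bar>(1 / real K) * (\<Sum>t<K. h t) - c\<bar> \<le> B"
proof -
  have "(1 / real K) * (\<Sum>t<K. h t) - c = (1 / real K) * (\<Sum>t<K. h t - c)"
    using K by (simp add: sum_subtractf field_simps)
  also have "\<bar>\<dots>\<bar> = (1 / real K) * \<bar>\<Sum>t<K. h t - c\<bar>" by (simp add: abs_mult)
  also have "\<dots> \<le> (1 / real K) * (\<Sum>t<K. \<bar>h t - c\<bar>)"
    by (rule mult_left_mono[OF sum_abs]) simp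
  also have "\<dots> \<le> (1 / real K) * (\<Sum>t<K. B)"
    by (intro mult_left_mono sum_mono) (auto intro: b)
  also have "\<dots> = B" using K by simp
  finally show ?thesis .
qed

lemma refine_contract:
  assumes n: "n \<ge> 1" and L: "\<forall>i. \<bar>f (i+1) - f i\<bar> \<le> (d::real)"
  shows "\<bar>refine n f (m+1) - refine n f m\<bar> \<le> d / 2"
proof -
  define N where "N = 2*n - 1"
  have N0: "N > 0" and N2: "2*n = N + 1" using n by (auto simp: N_def)
  have rN: "real (2*n) = real (N+1)" using N2 by simp
  obtain i where m: "m = 2*i \<or> m = 2*i+1" by (metis dvd_mult_div_cancel odd_two_times_div_two_succ)
  define a where "a = i - int n + 1"
  define g where "g t = f (a + int t)" for t
  have Lg: "\<bar>g s - g t\<bar> \<le> \<bar>real s - real t\<bar> * d" for s t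
    using lip_int[OF L, of "a + int s" "a + int t"] unfolding g_def by simp
  from m show ?thesis
  proof
    assume m: "m = 2*i"
    have e1: "refine n f (m+1) = (1 / real (N+1)) * (\<Sum>t<N+1. g t)"
      unfolding m refine_odd[OF n] g_def a_def N2 rN by simp
    have e2: "refine n f m = (1 / real N) * (\<Sum>t<N. g t)"
      unfolding m refine_even[OF n] g_def a_def N_def by simp
    show ?thesis unfolding e1 e2 by (rule avg1[OF N0 Lg])
  next
    assume m: "m = 2*i+1"
    have e1: "refine n f (m+1) = (1 / real N) * (\<Sum>t<N. g (t+1))"
    proof -
      have "m + 1 = 2*(i+1)" using m by simp
      then have "refine n f (m+1) = refine n f (2*(i+1))" by (simp only:)
      also have "\<dots> = (1 / real N) * (\<Sum>t<N. g (t+1))"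
        unfolding refine_even[OF n] g_def a_def N_def by (simp add: algebra_simps)
      finally show ?thesis .
    qed
    have e2: "refine n f m = (1 / real (N+1)) * (\<Sum>t<N+1. g t)"
      unfolding m refine_odd[OF n] g_def a_def N2 rN by simp
    show ?thesis unfolding e1 e2 by (rule avg2[OF N0 Lg])
  qed
qed

lemma refine_close:
  assumes n: "n \<ge> 1" and L: "\<forall>i. \<bar>f (i+1) - f i\<bar> \<le> (d::real)" and d: "d \<ge> 0"
  shows "\<bar>refine n f (2*i) - f i\<bar> \<le> real n * d" "\<bar>refine n f (2*i+1) - f i\<bar> \<le> real n * d"
proof -
  have b: "\<bar>f (i - int n + 1 + int t) - f i\<bar> \<le> real n * d" if "t < 2*n" for t
  proof -
    have "\<bar>f (i - int n + 1 + int t) - f i\<bar> \<le> real_of_int \<bar>(i - int n + 1 + int t) - i\<bar> * d"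
      by (rule lip_int[OF L])
    also have "\<dots> \<le> real n * d"
      using that d by (intro mult_right_mono) auto
    finally show ?thesis .
  qed
  show "\<bar>refine n f (2*i) - f i\<bar> \<le> real n * d"
    unfolding refine_even[OF n] by (rule avg_close) (use n b in auto)
  show "\<bar>refine n f (2*i+1) - f i\<bar> \<le> real n * d"
    unfolding refine_odd[OF n] by (rule avg_close) (use n b in auto)
qed

lemma sub_delta_0: "sub_delta n 0 = delta" by (simp add: sub_delta_def)
lemma sub_delta_Suc: "sub_delta n (Suc k) = refine n (sub_delta n k)" by (simp add: sub_delta_def)

lemma even_odd_cases: fixes m :: int obtains i where "m = 2*i" | i where "m = 2*i+1"
  using evenE oddE by blast

lemma sub_delta_diff:
  assumes n: "n \<ge> 1"
  shows "\<bar>sub_delta n k (i+1) - sub_delta n k i\<bar> \<le> (1/2)^k"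
proof (induction k arbitrary: i)
  case 0 then show ?case by (simp add: sub_delta_0 delta_def)
next
  case (Suc k)
  have "\<bar>refine n (sub_delta n k) (i+1) - refine n (sub_delta n k) i\<bar> \<le> (1/2)^k / 2"
    by (rule refine_contract[OF n]) (use Suc in auto)
  then show ?case by (simp add: sub_delta_Suc)
qed

lemma sub_delta_close:
  assumes n: "n \<ge> 1"
  shows "\<bar>sub_delta n (Suc k) (2*i) - sub_delta n k i\<bar> \<le> real n * (1/2)^k"
    "\<bar>sub_delta n (Suc k) (2*i+1) - sub_delta n k i\<bar> \<le> real n * (1/2)^k"
  using refine_close[OF n, of "sub_delta n k" "(1/2)^k" i] sub_delta_diff[OF n, of k]
  by (auto simp: sub_delta_Suc)

definition R :: "nat \<Rightarrow> nat \<Rightarrow> int" where "R n k = (2 * int n - 1) * (2^k - 1)"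

lemma sub_delta_support:
  assumes n: "n \<ge> 1"
  shows "\<bar>i\<bar> > R n k \<Longrightarrow> sub_delta n k i = 0"
proof (induction k arbitrary: i)
  case 0 then show ?case by (simp add: sub_delta_0 delta_def R_def)
next
  case (Suc k)
  have RS: "R n (Suc k) = 2 * R n k + 2 * int n - 1" by (simp add: R_def algebra_simps)
  show ?case
  proof (cases i rule: even_odd_cases)
    case (1 j)
    have "\<forall>t<2*n-1. sub_delta n k (j - int n + 1 + int t) = 0"
    proof (intro allI impI)
      fix t assume t: "t < 2*n-1"
      then have "int t \<le> 2 * int n - 2" using n by linarith
      then have "\<bar>j - int n + 1 + int t\<bar> > R n k" using Suc.prems 1 t n unfolding RS by (simp add: abs_if split: if_splits; linarith)
      then show "sub_delta n k (j - int n + 1 + int t) = 0" by (rule Suc.IH)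
    qed
    then show ?thesis unfolding 1 sub_delta_Suc refine_even[OF n] by simp
  next
    case (2 j)
    have "\<forall>t<2*n. sub_delta n k (j - int n + 1 + int t) = 0"
    proof (intro allI impI)
      fix t assume t: "t < 2*n"
      then have "int t \<le> 2 * int n - 1" using n by linarith
      then have "\<bar>j - int n + 1 + int t\<bar> > R n k" using Suc.prems 2 t n unfolding RS by (simp add: abs_if split: if_splits; linarith)
      then show "sub_delta n k (j - int n + 1 + int t) = 0" by (rule Suc.IH)
    qed
    then show ?thesis unfolding 2 sub_delta_Suc refine_odd[OF n] by simp
  qed
qed

lemma refine_bounds:
  assumes n: "n \<ge> 1" and b: "\<And>i. 0 \<le> f i \<and> f i \<le> M"
  shows "0 \<le> refine n f m \<and> refine n f m \<le> M"
proof -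
  have avg: "0 \<le> (1 / real K) * (\<Sum>t<K. f (a + int t)) \<and> (1 / real K) * (\<Sum>t<K. f (a + int t)) \<le> M"
    if "K > 0" for K a
  proof
    show "0 \<le> (1 / real K) * (\<Sum>t<K. f (a + int t))" using b by (simp add: sum_nonneg)
    have "(\<Sum>t<K. f (a + int t)) \<le> (\<Sum>t<K. M)" by (rule sum_mono) (use b in auto)
    then show "(1 / real K) * (\<Sum>t<K. f (a + int t)) \<le> M" using that by (simp add: field_simps)
  qed
  show ?thesis
  proof (cases m rule: even_odd_cases)
    case (1 i)
    show ?thesis unfolding 1 refine_even[OF n] using avg[of "2*n-1" "i - int n + 1"] n by (simp add: add.assoc)
  next
    case (2 i)
    show ?thesis unfolding 2 refine_odd[OF n] using avg[of "2*n" "i - int n + 1"] n by (simp add: add.assoc)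
  qed
qed

lemma sum_delta_le: "(\<Sum>t<K. delta (a + int t)) \<le> 1"
proof -
  have "delta (a + int t) = (if nat (-a) = t then (if a \<le> 0 then 1 else 0) else 0)" for t
    by (auto simp: delta_def)
  then show ?thesis by simp
qed

lemma sub_delta_bounds:
  assumes n: "n \<ge> 1"
  shows "0 \<le> sub_delta n k i" "k \<ge> 1 \<Longrightarrow> sub_delta n k i \<le> 1 / real (2*n-1)"
proof -
  have "k \<ge> 1 \<longrightarrow> (\<forall>i. 0 \<le> sub_delta n k i \<and> sub_delta n k i \<le> 1 / real (2*n-1))"
  proof (induction k)
    case 0 then show ?case by simp
  next
    case (Suc k)
    show ?case
    proof (cases "k = 0")
      case True
      have N: "real (2*n-1) > 0" using n by simp
      have "0 \<le> refine n delta i \<and> refine n delta i \<le> 1 / real (2*n-1)" for i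
      proof (cases i rule: even_odd_cases)
        case (1 j)
        have "0 \<le> (\<Sum>t<2*n-1. delta (j - int n + 1 + int t))" by (simp add: sum_nonneg delta_def)
        moreover have "(\<Sum>t<2*n-1. delta (j - int n + 1 + int t)) \<le> 1" by (rule sum_delta_le)
        ultimately show ?thesis unfolding 1 refine_even[OF n] using N
          by (simp add: divide_le_eq)
      next
        case (2 j)
        have "0 \<le> (\<Sum>t<2*n. delta (j - int n + 1 + int t))" by (simp add: sum_nonneg delta_def)
        moreover have "(\<Sum>t<2*n. delta (j - int n + 1 + int t)) \<le> 1" by (rule sum_delta_le)
        moreover have "1 / real (2*n) \<le> 1 / real (2*n-1)" using n N by (intro divide_left_mono) auto
        ultimately show ?thesis unfolding 2 refine_odd[OF n] using N n
          by (smt (verit, del_insts) divide_nonneg_nonneg mult_left_le of_nat_0_le_iff mult_nonneg_nonneg)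
      qed
      then show ?thesis using True by (simp add: sub_delta_Suc sub_delta_0)
    next
      case False
      then show ?thesis using Suc refine_bounds[OF n, of "sub_delta n k" "1 / real (2*n-1)"] by (simp add: sub_delta_Suc)
    qed
  qed
  moreover have "0 \<le> sub_delta n k i"
  proof (cases k)
    case 0 then show ?thesis by (simp add: sub_delta_0 delta_def)
  next
    case (Suc k') then show ?thesis using calculation by simp
  qed
  ultimately show "0 \<le> sub_delta n k i" "k \<ge> 1 \<Longrightarrow> sub_delta n k i \<le> 1 / real (2*n-1)" by auto
qed

lemma refine_sym:
  assumes n: "n \<ge> 1" and s: "\<And>i. f (-i) = f i"
  shows "refine n f (-m) = refine n f m"
proof (cases m rule: even_odd_cases)
  case (1 i)
  have "-m = 2*(-i)" using 1 by simp
  then have "refine n f (-m) = refine n f (2*(-i))" by (simp only:)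
  also have "\<dots> = (1 / real (2*n-1)) * (\<Sum>t<2*n-1. f (- i - int n + 1 + int t))"
    by (simp only: refine_even[OF n])
  also have "(\<Sum>t<2*n-1. f (- i - int n + 1 + int t)) = (\<Sum>t<2*n-1. f (- i - int n + 1 + int (2*n-1 - Suc t)))"
    by (rule sum.nat_diff_reindex[symmetric])
  also have "\<dots> = (\<Sum>t<2*n-1. f (i - int n + 1 + int t))"
  proof (rule sum.cong)
    fix t assume "t \<in> {..<2*n-1}"
    then have "- i - int n + 1 + int (2*n-1 - Suc t) = - (i - int n + 1 + int t)" using n by auto
    then show "f (- i - int n + 1 + int (2*n-1 - Suc t)) = f (i - int n + 1 + int t)" using s by metis
  qed simp
  finally show ?thesis unfolding 1 refine_even[OF n] .
next
  case (2 i)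
  have "-m = 2*(-i-1)+1" using 2 by simp
  then have "refine n f (-m) = refine n f (2*(-i-1)+1)" by (simp only:)
  also have "\<dots> = (1 / real (2*n)) * (\<Sum>t<2*n. f (- i - 1 - int n + 1 + int t))"
    by (simp only: refine_odd[OF n])
  also have "(\<Sum>t<2*n. f (- i - 1 - int n + 1 + int t)) = (\<Sum>t<2*n. f (- i - 1 - int n + 1 + int (2*n - Suc t)))"
    by (rule sum.nat_diff_reindex[symmetric])
  also have "\<dots> = (\<Sum>t<2*n. f (i - int n + 1 + int t))"
  proof (rule sum.cong)
    fix t assume "t \<in> {..<2*n}"
    then have "- i - 1 - int n + 1 + int (2*n - Suc t) = - (i - int n + 1 + int t)" using n by auto
    then show "f (- i - 1 - int n + 1 + int (2*n - Suc t)) = f (i - int n + 1 + int t)" using s by metis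
  qed simp
  finally show ?thesis unfolding 2 refine_odd[OF n] .
qed

lemma sub_delta_sym:
  assumes n: "n \<ge> 1"
  shows "sub_delta n k (-i) = sub_delta n k i"
proof (induction k arbitrary: i)
  case 0 then show ?case by (simp add: sub_delta_0 delta_def)
next
  case (Suc k) then show ?case by (simp add: sub_delta_Suc refine_sym[OF n])
qed

definition gk :: "nat \<Rightarrow> nat \<Rightarrow> real \<Rightarrow> real" where
  "gk n k x = sub_delta n k \<lfloor>2^k * x\<rfloor>"

lemma floor_double: "\<lfloor>2*y\<rfloor> = 2*\<lfloor>y\<rfloor> \<or> \<lfloor>2*y\<rfloor> = 2*\<lfloor>y\<rfloor>+1" for y :: real
proof -
  have a: "real_of_int \<lfloor>y\<rfloor> \<le> y" "y < real_of_int \<lfloor>y\<rfloor> + 1" by linarith+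
  have "2*\<lfloor>y\<rfloor> \<le> \<lfloor>2*y\<rfloor>" using a by (intro le_floor_iff[THEN iffD2]) simp
  moreover have "\<lfloor>2*y\<rfloor> < 2*\<lfloor>y\<rfloor> + 2" using a by (subst floor_less_iff) (simp; linarith)
  ultimately show ?thesis by linarith
qed

lemma g_step:
  assumes n: "n \<ge> 1"
  shows "\<bar>gk n (Suc k) x - gk n k x\<bar> \<le> real n * (1/2)^k"
proof -
  have "2^(Suc k) * x = 2 * (2^k * x)" by simp
  then have e: "gk n (Suc k) x = sub_delta n (Suc k) \<lfloor>2 * (2^k * x)\<rfloor>" unfolding gk_def by (simp only:)
  from floor_double[of "2^k*x"] show ?thesis
    using sub_delta_close[OF n, of k "\<lfloor>2^k * x\<rfloor>"] unfolding e gk_def by (auto simp: mult.assoc)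
qed

lemma seq_conv:
  fixes s :: "nat \<Rightarrow> real"
  assumes st: "\<And>k. \<bar>s (Suc k) - s k\<bar> \<le> c * (1/2)^k"
  shows "\<exists>L. s \<longlonglongrightarrow> L \<and> (\<forall>k. \<bar>s k - L\<bar> \<le> 2 * c * (1/2)^k)"
proof -
  define u where "u = (\<lambda>k. s k + 2 * c * (1/2)^k)"
  define v where "v = (\<lambda>k. s k - 2 * c * (1/2)^k)"
  have dec: "decseq u"
  proof (rule decseq_SucI)
    fix k show "u (Suc k) \<le> u k" using st[of k] by (simp add: u_def abs_le_iff)
  qed
  have inc: "incseq v"
  proof (rule incseq_SucI)
    fix k show "v k \<le> v (Suc k)" using st[of k] by (simp add: v_def abs_le_iff)
  qed
  have "\<forall>k. v 0 \<le> u k"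
  proof
    fix k
    have "v 0 \<le> v k" using inc by (simp add: incseq_def)
    moreover have "c * (1/2)^k \<ge> 0" using st[of k] by (meson abs_ge_zero order_trans)
    ultimately show "v 0 \<le> u k" by (simp add: u_def v_def)
  qed
  from decseq_convergent[OF dec this] obtain L where uL: "u \<longlonglongrightarrow> L" and Lu: "\<forall>k. L \<le> u k" by blast
  have z: "(\<lambda>k. 2 * c * (1/2)^k :: real) \<longlonglongrightarrow> 0"
    by (intro tendsto_mult_right_zero LIMSEQ_power_zero) simp
  have "(\<lambda>k. u k - 2 * c * (1/2)^k) \<longlonglongrightarrow> L - 0" by (intro tendsto_diff uL z)
  then have sL: "s \<longlonglongrightarrow> L" by (simp add: u_def)
  have "(\<lambda>k. s k - 2 * c * (1/2)^k) \<longlonglongrightarrow> L - 0" by (intro tendsto_diff sL z)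
  then have "v \<longlonglongrightarrow> L" by (simp add: v_def)
  then have vL: "\<forall>k. v k \<le> L" using inc incseq_le by blast
  have "\<forall>k. \<bar>s k - L\<bar> \<le> 2 * c * (1/2)^k"
  proof
    fix k
    have "v k \<le> L" "L \<le> u k" using vL Lu by auto
    then show "\<bar>s k - L\<bar> \<le> 2 * c * (1/2)^k" unfolding u_def v_def abs_le_iff by simp
  qed
  then show ?thesis using sL by blast
qed

definition phiL :: "nat \<Rightarrow> real \<Rightarrow> real" where
  "phiL n x = lim (\<lambda>k. gk n k x)"

lemma phiL_conv:
  assumes n: "n \<ge> 1"
  shows "(\<lambda>k. gk n k x) \<longlonglongrightarrow> phiL n x" "\<bar>gk n k x - phiL n x\<bar> \<le> 2 * real n * (1/2)^k"
proof -
  obtain L where L: "(\<lambda>k. gk n k x) \<longlonglongrightarrow> L" "\<forall>k. \<bar>gk n k x - L\<bar> \<le> 2 * real n * (1/2)^k"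
    using seq_conv[of "\<lambda>k. gk n k x" "real n"] g_step[OF n] by blast
  then have "phiL n x = L" unfolding phiL_def by (simp add: limI)
  then show "(\<lambda>k. gk n k x) \<longlonglongrightarrow> phiL n x" "\<bar>gk n k x - phiL n x\<bar> \<le> 2 * real n * (1/2)^k"
    using L by auto
qed

lemma gk_grid: "gk n k (real_of_int i / 2^k) = sub_delta n k i"
  by (simp add: gk_def)

lemma gk_lip:
  assumes n: "n \<ge> 1"
  shows "\<bar>gk n k x - gk n k y\<bar> \<le> \<bar>x - y\<bar> + (1/2)^k"
proof -
  have "\<bar>gk n k x - gk n k y\<bar> \<le> real_of_int \<bar>\<lfloor>2^k*x\<rfloor> - \<lfloor>2^k*y\<rfloor>\<bar> * (1/2)^k"
    unfolding gk_def by (rule lip_int) (use sub_delta_diff[OF n] in auto)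
  also have "\<dots> \<le> (\<bar>2^k*x - 2^k*y\<bar> + 1) * (1/2)^k"
  proof (rule mult_right_mono)
    have "real_of_int \<lfloor>2^k*x\<rfloor> \<le> 2^k*x" "2^k*x < real_of_int \<lfloor>2^k*x\<rfloor> + 1"
         "real_of_int \<lfloor>2^k*y\<rfloor> \<le> 2^k*y" "2^k*y < real_of_int \<lfloor>2^k*y\<rfloor> + 1" by linarith+
    then show "real_of_int \<bar>\<lfloor>2^k*x\<rfloor> - \<lfloor>2^k*y\<rfloor>\<bar> \<le> \<bar>2^k*x - 2^k*y\<bar> + 1" by linarith
  qed simp
  also have "\<dots> = \<bar>x - y\<bar> + (1/2)^k"
  proof -
    have h1: "\<bar>2^k*x - 2^k*y\<bar> = 2^k*\<bar>x-y\<bar>" by (simp add: abs_mult right_diff_distrib[symmetric])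
    show ?thesis unfolding h1 by (simp add: power_one_over field_simps)
  qed
  finally show ?thesis .
qed

lemma phiL_lip:
  assumes n: "n \<ge> 1"
  shows "\<bar>phiL n x - phiL n y\<bar> \<le> \<bar>x - y\<bar>"
proof -
  have b: "\<bar>phiL n x - phiL n y\<bar> \<le> \<bar>x - y\<bar> + (1 + 4 * real n) * (1/2)^k" for k
    using gk_lip[OF n, of k x y] phiL_conv(2)[OF n, of k x] phiL_conv(2)[OF n, of k y]
    by (simp add: abs_le_iff algebra_simps)
  have "(\<lambda>k. \<bar>x - y\<bar> + (1 + 4 * real n) * (1/2)^k :: real) \<longlonglongrightarrow> \<bar>x - y\<bar> + 0"
    by (intro tendsto_add tendsto_const tendsto_mult_right_zero LIMSEQ_power_zero) simp
  then have "(\<lambda>k. \<bar>x - y\<bar> + (1 + 4 * real n) * (1/2)^k :: real) \<longlonglongrightarrow> \<bar>x - y\<bar>" by simp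
  then show ?thesis by (rule LIMSEQ_le_const) (use b in auto)
qed

lemma phiL_cont:
  assumes n: "n \<ge> 1"
  shows "continuous_on UNIV (phiL n)"
  unfolding continuous_on_iff dist_real_def
proof (intro ballI allI impI)
  fix x e :: real assume "e > 0"
  then show "\<exists>d>0. \<forall>x'\<in>UNIV. \<bar>x' - x\<bar> < d \<longrightarrow> \<bar>phiL n x' - phiL n x\<bar> < e"
    using phiL_lip[OF n] le_less_trans by blast
qed

lemma phiL_limit:
  assumes n: "n \<ge> 1"
  shows "is_limit_function (sub_delta n) (phiL n)"
  unfolding is_limit_function_def
proof (intro conjI allI impI)
  show "continuous_on UNIV (phiL n)" by (rule phiL_cont[OF n])
  fix e :: real assume e: "e > 0"
  have "(\<lambda>k. 2 * real n * (1/2)^k :: real) \<longlonglongrightarrow> 0"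
    by (intro tendsto_mult_right_zero LIMSEQ_power_zero) simp
  from order_tendstoD(2)[OF this e] have ev: "\<forall>\<^sub>F k in sequentially. 2 * real n * (1/2)^k < e" .
  show "\<forall>\<^sub>F k in sequentially. \<forall>i. \<bar>sub_delta n k i - phiL n (real_of_int i / 2 ^ k)\<bar> < e"
    using ev
  proof eventually_elim
    case (elim k)
    show ?case
    proof
      fix i
      show "\<bar>sub_delta n k i - phiL n (real_of_int i / 2 ^ k)\<bar> < e"
        using phiL_conv(2)[OF n, of k "real_of_int i / 2^k"] elim unfolding gk_grid by linarith
    qed
  qed
qed

lemma limit_unique:
  assumes F: "is_limit_function f F" and G: "is_limit_function f G"
  shows "F = G"
proof
  fix x :: real
  define xs where "xs k = real_of_int \<lfloor>2^k * x\<rfloor> / 2^k" for k :: nat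
  have xb: "\<bar>xs k - x\<bar> \<le> (1/2)^k" for k
  proof -
    have "real_of_int \<lfloor>2^k*x\<rfloor> \<le> 2^k*x" "2^k*x < real_of_int \<lfloor>2^k*x\<rfloor> + 1" by linarith+
    then have "\<bar>real_of_int \<lfloor>2^k*x\<rfloor> - 2^k*x\<bar> \<le> 1" by linarith
    then have "\<bar>real_of_int \<lfloor>2^k*x\<rfloor> - 2^k*x\<bar> / 2^k \<le> 1 / 2^k" by (simp add: divide_right_mono)
    moreover have "xs k - x = (real_of_int \<lfloor>2^k*x\<rfloor> - 2^k*x) / 2^k" by (simp add: xs_def field_simps)
    ultimately show ?thesis by (simp add: abs_divide power_one_over)
  qed
  have "(\<lambda>k. (1/2)^k :: real) \<longlonglongrightarrow> 0" by (intro LIMSEQ_power_zero) simp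
  then have "(\<lambda>k. xs k - x) \<longlonglongrightarrow> 0"
  proof (rule Lim_null_comparison[of _ "\<lambda>k. (1/2::real)^k", rotated])
    show "\<forall>\<^sub>F k in sequentially. norm (xs k - x) \<le> (1/2)^k" by (simp add: xb)
  qed
  then have xsx: "xs \<longlonglongrightarrow> x" by (simp add: LIM_zero_iff)
  have cF: "continuous_on UNIV F" and cG: "continuous_on UNIV G" using F G by (auto simp: is_limit_function_def)
  have "(\<lambda>k. F (xs k) - G (xs k)) \<longlonglongrightarrow> F x - G x"
    by (intro tendsto_diff continuous_on_tendsto_compose[OF cF xsx] continuous_on_tendsto_compose[OF cG xsx]) auto
  then have lim: "(\<lambda>k. \<bar>F (xs k) - G (xs k)\<bar>) \<longlonglongrightarrow> \<bar>F x - G x\<bar>" by (rule tendsto_rabs)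
  have *: "\<bar>F x - G x\<bar> \<le> 2 * e" if e: "e > 0" for e
  proof -
    have "\<forall>\<^sub>F k in sequentially. \<forall>i. \<bar>f k i - F (real_of_int i / 2 ^ k)\<bar> < e"
         "\<forall>\<^sub>F k in sequentially. \<forall>i. \<bar>f k i - G (real_of_int i / 2 ^ k)\<bar> < e"
      using F G e by (auto simp: is_limit_function_def)
    then have "\<forall>\<^sub>F k in sequentially. \<bar>F (xs k) - G (xs k)\<bar> \<le> 2 * e"
    proof eventually_elim
      case (elim k)
      have "\<bar>f k \<lfloor>2^k * x\<rfloor> - F (xs k)\<bar> < e" "\<bar>f k \<lfloor>2^k * x\<rfloor> - G (xs k)\<bar> < e"
        using elim unfolding xs_def by blast+
      then show ?case by linarith
    qed
    then obtain N where "\<forall>k\<ge>N. \<bar>F (xs k) - G (xs k)\<bar> \<le> 2 * e" by (auto simp: eventually_sequentially)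
    then show ?thesis using LIMSEQ_le_const2[OF lim] by blast
  qed
  show "F x = G x"
  proof (rule ccontr)
    assume "F x \<noteq> G x"
    then have "\<bar>F x - G x\<bar> / 4 > 0" by simp
    from *[OF this] show False using \<open>\<bar>F x - G x\<bar> / 4 > 0\<close> by (simp add: field_simps)
  qed
qed

lemma phi_eq:
  assumes n: "n \<ge> 1"
  shows "phi n = phiL n"
  unfolding phi_def
proof (rule the_equality)
  show "is_limit_function (sub_delta n) (phiL n)" by (rule phiL_limit[OF n])
  fix F assume "is_limit_function (sub_delta n) F"
  then show "F = phiL n" by (rule limit_unique[OF _ phiL_limit[OF n]])
qed

lemma phi_limit:
  assumes n: "n \<ge> 1"
  shows "is_limit_function (sub_delta n) (phi n)"
  using phiL_limit[OF n] phi_eq[OF n] by simp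

lemma phi_conv:
  assumes n: "n \<ge> 1"
  shows "(\<lambda>k. gk n k x) \<longlonglongrightarrow> phi n x"
  using phiL_conv(1)[OF n] phi_eq[OF n] by simp

lemma phi_bounds:
  assumes n: "n \<ge> 1"
  shows "0 \<le> phi n x" "phi n x \<le> 1 / real (2*n-1)"
proof -
  have "\<forall>k\<ge>0. 0 \<le> gk n k x" unfolding gk_def using sub_delta_bounds(1)[OF n] by blast
  then show "0 \<le> phi n x" by (intro LIMSEQ_le_const[OF phi_conv[OF n]]) blast
  have "\<forall>k\<ge>1. gk n k x \<le> 1 / real (2*n-1)" unfolding gk_def using sub_delta_bounds(2)[OF n] by blast
  then show "phi n x \<le> 1 / real (2*n-1)" by (intro LIMSEQ_le_const2[OF phi_conv[OF n]]) blast
qed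

lemma gk_support:
  assumes n: "n \<ge> 1" and y: "\<bar>y\<bar> \<ge> 2 * real n"
  shows "gk n k y = 0"
proof -
  define P :: int where "P = 2^k"
  have P1: "P \<ge> 1" by (simp add: P_def)
  have RP: "R n k = 2 * int n * P - 2 * int n - P + 1" by (simp add: R_def P_def algebra_simps)
  have "\<bar>\<lfloor>2^k * y\<rfloor>\<bar> > R n k"
  proof (cases "y \<ge> 0")
    case True
    then have "y \<ge> 2 * real n" using y by simp
    then have "real_of_int (2 * int n * P) \<le> 2^k * y" by (simp add: P_def mult.commute mult_left_mono)
    then have "2 * int n * P \<le> \<lfloor>2^k * y\<rfloor>" by (simp only: le_floor_iff)
    then show ?thesis unfolding RP using P1 n by linarith
  next
    case False
    then have "y \<le> - 2 * real n" using y by simp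
    then have "2^k * y \<le> 2^k * (- 2 * real n)" by (intro mult_left_mono) auto
    then have "2^k * y \<le> real_of_int (- 2 * int n * P)" by (simp add: P_def algebra_simps)
    then have "\<lfloor>2^k * y\<rfloor> \<le> - 2 * int n * P" by (metis floor_mono floor_of_int)
    then show ?thesis unfolding RP using P1 n by linarith
  qed
  then show ?thesis unfolding gk_def by (rule sub_delta_support[OF n])
qed

lemma phi_support:
  assumes n: "n \<ge> 1" and y: "\<bar>y\<bar> \<ge> 2 * real n"
  shows "phi n y = 0"
proof -
  have "(\<lambda>k. gk n k y) = (\<lambda>k. 0)" using gk_support[OF n y] by simp
  then have "(\<lambda>k. 0::real) \<longlonglongrightarrow> phi n y" using phi_conv[OF n, of y] by simp
  then show ?thesis using LIMSEQ_unique tendsto_const by metis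
qed

lemma phi_sym:
  assumes n: "n \<ge> 1"
  shows "phi n (-x) = phi n x"
proof -
  have L: "is_limit_function (sub_delta n) (phi n)" by (rule phi_limit[OF n])
  have "is_limit_function (sub_delta n) (\<lambda>x. phi n (-x))"
    unfolding is_limit_function_def
  proof (intro conjI allI impI)
    have "continuous_on UNIV (phi n)" using L by (simp add: is_limit_function_def)
    then show "continuous_on UNIV (\<lambda>x. phi n (- x))"
      by (rule continuous_on_compose2[OF _ continuous_on_minus[OF continuous_on_id]]) simp
    fix e :: real assume e: "e > 0"
    then have "\<forall>\<^sub>F k in sequentially. \<forall>i. \<bar>sub_delta n k i - phi n (real_of_int i / 2 ^ k)\<bar> < e"
      using L by (simp add: is_limit_function_def)
    then show "\<forall>\<^sub>F k in sequentially. \<forall>i. \<bar>sub_delta n k i - phi n (- (real_of_int i / 2 ^ k))\<bar> < e"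
    proof eventually_elim
      case (elim k)
      show ?case
      proof
        fix i
        have a: "\<bar>sub_delta n k (-i) - phi n (real_of_int (-i) / 2 ^ k)\<bar> < e" using elim by (rule spec)
        have b: "real_of_int (-i) / 2 ^ k = - (real_of_int i / 2 ^ k)" by simp
        from a show "\<bar>sub_delta n k i - phi n (- (real_of_int i / 2 ^ k))\<bar> < e"
          unfolding b sub_delta_sym[OF n] .
      qed
    qed
  qed
  from fun_cong[OF limit_unique[OF this L], of x] show ?thesis by simp
qed

lemma cover:
  fixes m' i M Rr :: int
  assumes "\<bar>m'\<bar> \<le> M" "\<bar>i\<bar> > M + Rr"
  shows "\<bar>m' - 2^k * i\<bar> > Rr"
proof -
  have "\<bar>(2::int)^k * i\<bar> \<ge> \<bar>i\<bar>"
  proof -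
    have "(1::int) \<le> 2^k" by simp
    then have "1 * \<bar>i\<bar> \<le> 2^k * \<bar>i\<bar>" by (intro mult_right_mono) auto
    then show ?thesis by (simp add: abs_mult)
  qed
  then show ?thesis using assms by linarith
qed

lemma pou_disc:
  assumes n: "n \<ge> 1"
  shows "finite S \<Longrightarrow> (\<forall>i. i \<notin> S \<longrightarrow> sub_delta n k (m - 2^k * i) = 0)
     \<Longrightarrow> (\<Sum>i\<in>S. sub_delta n k (m - 2^k * i)) = 1"
proof (induction k arbitrary: m S)
  case 0
  have "m \<in> S" using 0(2) by (auto simp: sub_delta_0 delta_def)
  have "(\<Sum>i\<in>S. sub_delta n 0 (m - 2^0 * i)) = (\<Sum>i\<in>S. if m = i then 1 else 0)"
    by (rule sum.cong) (auto simp: sub_delta_0 delta_def)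
  also have "\<dots> = 1" using \<open>m \<in> S\<close> 0(1) by simp
  finally show ?case .
next
  case (Suc k)
  define Rr where "Rr = R n k"
  define M where "M = \<bar>m\<bar> + int n"
  define T where "T = S \<union> {-(M + Rr) .. M + Rr}"
  have fT: "finite T" using Suc.prems by (simp add: T_def)
  have ST: "S \<subseteq> T" by (simp add: T_def)
  have notT: "\<bar>i\<bar> > M + Rr" if "i \<notin> T" for i using that by (auto simp: T_def)
  have e1: "(\<Sum>i\<in>S. sub_delta n (Suc k) (m - 2^Suc k * i)) = (\<Sum>i\<in>T. sub_delta n (Suc k) (m - 2^Suc k * i))"
    by (rule sum.mono_neutral_left[OF fT ST]) (use Suc.prems in auto)
  have IH: "(\<Sum>i\<in>T. sub_delta n k (m' - 2^k * i)) = 1" if "\<bar>m'\<bar> \<le> M" for m'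
  proof (rule Suc.IH[OF fT])
    show "\<forall>i. i \<notin> T \<longrightarrow> sub_delta n k (m' - 2 ^ k * i) = 0"
    proof (intro allI impI)
      fix i assume "i \<notin> T"
      then have "\<bar>m' - 2^k * i\<bar> > Rr" using cover[OF that notT] by blast
      then show "sub_delta n k (m' - 2 ^ k * i) = 0" unfolding Rr_def by (rule sub_delta_support[OF n])
    qed
  qed
  show ?case
  proof (cases m rule: even_odd_cases)
    case (1 q)
    have "(\<Sum>i\<in>T. sub_delta n (Suc k) (m - 2^Suc k * i))
        = (\<Sum>i\<in>T. (1 / real (2*n-1)) * (\<Sum>t<2*n-1. sub_delta n k ((q - int n + 1 + int t) - 2^k * i)))"
    proof (rule sum.cong[OF refl])
      fix i
      have "m - 2^Suc k * i = 2 * (q - 2^k * i)" using 1 by (simp add: algebra_simps)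
      then have "sub_delta n (Suc k) (m - 2^Suc k * i) = refine n (sub_delta n k) (2 * (q - 2^k * i))"
        by (simp only: sub_delta_Suc)
      also have "\<dots> = (1 / real (2*n-1)) * (\<Sum>t<2*n-1. sub_delta n k ((q - 2^k * i) - int n + 1 + int t))"
        by (rule refine_even[OF n])
      also have "\<dots> = (1 / real (2*n-1)) * (\<Sum>t<2*n-1. sub_delta n k ((q - int n + 1 + int t) - 2^k * i))"
        by (simp add: algebra_simps)
      finally show "sub_delta n (Suc k) (m - 2^Suc k * i)
          = (1 / real (2*n-1)) * (\<Sum>t<2*n-1. sub_delta n k ((q - int n + 1 + int t) - 2^k * i))" .
    qed
    also have "\<dots> = (1 / real (2*n-1)) * (\<Sum>t<2*n-1. \<Sum>i\<in>T. sub_delta n k ((q - int n + 1 + int t) - 2^k * i))"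
      by (simp add: sum_distrib_left sum.swap[of _ T])
    also have "\<dots> = (1 / real (2*n-1)) * (\<Sum>t<2*n-1. 1)"
    proof (intro arg_cong[where f="\<lambda>z. (1 / real (2*n-1)) * z"] sum.cong refl IH)
      fix t assume "t \<in> {..<2*n-1}"
      then show "\<bar>q - int n + 1 + int t\<bar> \<le> M" unfolding M_def 1 using n by auto
    qed
    also have "\<dots> = 1" using n by simp
    finally show ?thesis using e1 by simp
  next
    case (2 q)
    have "(\<Sum>i\<in>T. sub_delta n (Suc k) (m - 2^Suc k * i))
        = (\<Sum>i\<in>T. (1 / real (2*n)) * (\<Sum>t<2*n. sub_delta n k ((q - int n + 1 + int t) - 2^k * i)))"
    proof (rule sum.cong[OF refl])
      fix i
      have "m - 2^Suc k * i = 2 * (q - 2^k * i) + 1" using 2 by (simp add: algebra_simps)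
      then have "sub_delta n (Suc k) (m - 2^Suc k * i) = refine n (sub_delta n k) (2 * (q - 2^k * i) + 1)"
        by (simp only: sub_delta_Suc)
      also have "\<dots> = (1 / real (2*n)) * (\<Sum>t<2*n. sub_delta n k ((q - 2^k * i) - int n + 1 + int t))"
        by (rule refine_odd[OF n])
      also have "\<dots> = (1 / real (2*n)) * (\<Sum>t<2*n. sub_delta n k ((q - int n + 1 + int t) - 2^k * i))"
        by (simp add: algebra_simps)
      finally show "sub_delta n (Suc k) (m - 2^Suc k * i)
          = (1 / real (2*n)) * (\<Sum>t<2*n. sub_delta n k ((q - int n + 1 + int t) - 2^k * i))" .
    qed
    also have "\<dots> = (1 / real (2*n)) * (\<Sum>t<2*n. \<Sum>i\<in>T. sub_delta n k ((q - int n + 1 + int t) - 2^k * i))"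
      by (simp add: sum_distrib_left sum.swap[of _ T])
    also have "\<dots> = (1 / real (2*n)) * (\<Sum>t<2*n. 1)"
    proof (intro arg_cong[where f="\<lambda>z. (1 / real (2*n)) * z"] sum.cong refl IH)
      fix t assume "t \<in> {..<2*n}"
      then show "\<bar>q - int n + 1 + int t\<bar> \<le> M" unfolding M_def 2 using n by auto
    qed
    also have "\<dots> = 1" using n by simp
    finally show ?thesis using e1 by simp
  qed
qed

definition W :: "nat \<Rightarrow> real \<Rightarrow> int set" where
  "W n x = {\<lfloor>x\<rfloor> - 2 * int n + 1 .. \<lfloor>x\<rfloor> + 2 * int n}"

lemma W_out: "i \<notin> W n x \<Longrightarrow> \<bar>x - real_of_int i\<bar> \<ge> 2 * real n"
proof -
  assume "i \<notin> W n x"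
  then have "i \<le> \<lfloor>x\<rfloor> - 2 * int n \<or> i \<ge> \<lfloor>x\<rfloor> + 2 * int n + 1" by (auto simp: W_def)
  moreover have "real_of_int \<lfloor>x\<rfloor> \<le> x" "x < real_of_int \<lfloor>x\<rfloor> + 1" by linarith+
  ultimately show ?thesis
  proof (elim disjE)
    assume "i \<le> \<lfloor>x\<rfloor> - 2 * int n"
    then have "real_of_int i \<le> real_of_int \<lfloor>x\<rfloor> - 2 * real n" by linarith
    then show ?thesis using \<open>real_of_int \<lfloor>x\<rfloor> \<le> x\<close> by linarith
  next
    assume "i \<ge> \<lfloor>x\<rfloor> + 2 * int n + 1"
    then have "real_of_int i \<ge> real_of_int \<lfloor>x\<rfloor> + 2 * real n + 1" by linarith
    then show ?thesis using \<open>x < real_of_int \<lfloor>x\<rfloor> + 1\<close> by linarith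
  qed
qed

lemma finite_W: "finite (W n x)" by (simp add: W_def)
lemma card_W: "card (W n x) = 4 * n" by (simp add: W_def)

lemma gk_shift: "gk n k (x - real_of_int i) = sub_delta n k (\<lfloor>2^k * x\<rfloor> - 2^k * i)"
proof -
  have "2^k * (x - real_of_int i) = 2^k * x - real_of_int (2^k * i)" by (simp add: algebra_simps)
  then show ?thesis unfolding gk_def by (simp only: floor_diff_of_int)
qed

lemma pou:
  assumes n: "n \<ge> 1"
  shows "(\<Sum>i\<in>W n x. phi n (x - real_of_int i)) = 1"
proof -
  have one: "(\<Sum>i\<in>W n x. gk n k (x - real_of_int i)) = 1" for k
    unfolding gk_shift
  proof (rule pou_disc[OF n finite_W])
    show "\<forall>i. i \<notin> W n x \<longrightarrow> sub_delta n k (\<lfloor>2 ^ k * x\<rfloor> - 2 ^ k * i) = 0"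
      using gk_support[OF n W_out] unfolding gk_shift by blast
  qed
  have "(\<lambda>k. \<Sum>i\<in>W n x. gk n k (x - real_of_int i)) \<longlonglongrightarrow> (\<Sum>i\<in>W n x. phi n (x - real_of_int i))"
    by (intro tendsto_sum phi_conv[OF n])
  then have "(\<lambda>k. 1::real) \<longlonglongrightarrow> (\<Sum>i\<in>W n x. phi n (x - real_of_int i))" unfolding one .
  then show ?thesis using LIMSEQ_unique tendsto_const by metis
qed

lemma psi_eq:
  assumes n: "n \<ge> 1" and S: "finite S" and c: "\<And>i. \<bar>x - real_of_int i\<bar> < 2 * real n \<Longrightarrow> i \<in> S"
  shows "psi n x = (\<Sum>i\<in>S. (phi n (x - real_of_int i))\<^sup>2)"
proof -
  have "psi n x = infsum (\<lambda>i. (phi n (x - real_of_int i))\<^sup>2) S"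
    unfolding psi_def
  proof (rule infsum_cong_neutral)
    fix i assume "i \<in> UNIV - S"
    then have "\<bar>x - real_of_int i\<bar> \<ge> 2 * real n" using c by force
    then show "(phi n (x - real_of_int i))\<^sup>2 = 0" using phi_support[OF n] by simp
  qed auto
  then show ?thesis using S by simp
qed

lemma psi_W:
  assumes n: "n \<ge> 1"
  shows "psi n x = (\<Sum>i\<in>W n x. (phi n (x - real_of_int i))\<^sup>2)"
  by (rule psi_eq[OF n finite_W]) (use W_out in force)

lemma psi_upper:
  assumes n: "n \<ge> 1"
  shows "psi n x \<le> 1 / real n"
proof -
  define c where "c = 1 / real (2*n-1)"
  have "psi n x \<le> (\<Sum>i\<in>W n x. phi n (x - real_of_int i) * c)"
    unfolding psi_W[OF n] power2_eq_square
  proof (rule sum_mono)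
    fix i
    show "phi n (x - real_of_int i) * phi n (x - real_of_int i) \<le> phi n (x - real_of_int i) * c"
      unfolding c_def by (rule mult_left_mono[OF phi_bounds(2)[OF n] phi_bounds(1)[OF n]])
  qed
  also have "\<dots> = c" using pou[OF n] by (simp add: sum_distrib_right[symmetric])
  also have "c \<le> 1 / real n" unfolding c_def using n by (intro divide_left_mono) auto
  finally show ?thesis .
qed

lemma psi_lower:
  assumes n: "n \<ge> 1"
  shows "psi n x \<ge> 1 / (4 * real n)"
proof -
  have "(\<Sum>i\<in>W n x. phi n (x - real_of_int i))\<^sup>2 \<le> (\<Sum>i\<in>W n x. (phi n (x - real_of_int i))\<^sup>2) * card (W n x)"
    by (rule sum_squared_le_sum_of_squares)
  then have "1 \<le> psi n x * (4 * real n)" unfolding pou[OF n] psi_W[OF n] card_W by simp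
  then show ?thesis using n by (simp add: divide_le_eq mult.commute)
qed

lemma psi_periodic:
  assumes n: "n \<ge> 1"
  shows "psi n (x + 1) = psi n x"
proof -
  have "psi n (x + 1) = (\<Sum>i\<in>(\<lambda>i. i + 1) ` W n x. (phi n (x + 1 - real_of_int i))\<^sup>2)"
  proof (rule psi_eq[OF n])
    show "finite ((\<lambda>i. i + 1) ` W n x)" using finite_W by simp
    fix i assume "\<bar>x + 1 - real_of_int i\<bar> < 2 * real n"
    then have "\<bar>x - real_of_int (i - 1)\<bar> < 2 * real n" by simp
    then have "i - 1 \<in> W n x" using W_out by force
    then show "i \<in> (\<lambda>i. i + 1) ` W n x" by (metis diff_add_cancel image_eqI)
  qed
  also have "\<dots> = (\<Sum>i\<in>W n x. (phi n (x + 1 - real_of_int (i + 1)))\<^sup>2)"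
    by (subst sum.reindex) (auto simp: inj_on_def)
  also have "\<dots> = psi n x" unfolding psi_W[OF n] by simp
  finally show ?thesis .
qed

lemma psi_symm:
  assumes n: "n \<ge> 1"
  shows "psi n (- x) = psi n x"
proof -
  have "psi n (- x) = (\<Sum>i\<in>uminus ` W n x. (phi n (- x - real_of_int i))\<^sup>2)"
  proof (rule psi_eq[OF n])
    show "finite (uminus ` W n x)" using finite_W by simp
    fix i assume "\<bar>- x - real_of_int i\<bar> < 2 * real n"
    then have "\<bar>x - real_of_int (- i)\<bar> < 2 * real n" by simp
    then have "- i \<in> W n x" using W_out by force
    then show "i \<in> uminus ` W n x" by (metis image_eqI minus_minus)
  qed
  also have "\<dots> = (\<Sum>i\<in>W n x. (phi n (- x - real_of_int (- i)))\<^sup>2)"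
    by (subst sum.reindex) (auto simp: inj_on_def)
  also have "\<dots> = (\<Sum>i\<in>W n x. (phi n (- (x - real_of_int i)))\<^sup>2)" by simp
  also have "\<dots> = psi n x" unfolding psi_W[OF n] phi_sym[OF n] ..
  finally show ?thesis .
qed

lemma psi_integrable:
  assumes n: "n \<ge> 1"
  shows "psi n integrable_on {0..1}"
proof -
  define S where "S = {- 2 * int n .. 2 * int n + 1}"
  have eq: "psi n x = (\<Sum>i\<in>S. (phi n (x - real_of_int i))\<^sup>2)" if "x \<in> {0..1}" for x
  proof (rule psi_eq[OF n])
    show "finite S" by (simp add: S_def)
    fix i assume i: "\<bar>x - real_of_int i\<bar> < 2 * real n"
    have "0 \<le> x" "x \<le> 1" using that by auto
    then have "real_of_int (-2 * int n) < real_of_int i" "real_of_int i < real_of_int (2 * int n + 1)"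
      using i by (auto simp: abs_less_iff)
    then have "-2 * int n < i" "i < 2 * int n + 1" by (simp only: of_int_less_iff)+
    then show "i \<in> S" unfolding S_def by simp
  qed
  have pc: "continuous_on UNIV (phi n)" using phi_limit[OF n] by (simp add: is_limit_function_def)
  have "continuous_on {0..1} (\<lambda>x. \<Sum>i\<in>S. (phi n (x - real_of_int i))\<^sup>2)"
  proof (intro continuous_on_sum continuous_on_power)
    fix i
    show "continuous_on {0..1} (\<lambda>x. phi n (x - real_of_int i))"
      by (rule continuous_on_compose2[OF pc continuous_on_diff[OF continuous_on_id continuous_on_const]]) simp
  qed
  then have "continuous_on {0..1} (psi n)" by (rule continuous_on_eq) (use eq in simp)
  then show ?thesis by (rule integrable_continuous_interval)
qed

lemma int_bounds:
  assumes n: "n \<ge> 1"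
  shows "1 / 4 / real n \<le> integral {0..1} (psi n) \<and> integral {0..1} (psi n) \<le> 1 / real n"
proof
  have "integral {0..1} (\<lambda>x::real. 1 / (4 * real n)) \<le> integral {0..1} (psi n)"
  proof (rule Henstock_Kurzweil_Integration.integral_le)
    show "psi n integrable_on {0..1}" by (rule psi_integrable[OF n])
    show "(\<lambda>x. 1 / (4 * real n)) integrable_on {0..1::real}" by (rule Henstock_Kurzweil_Integration.integrable_const_ivl)
  qed (rule psi_lower[OF n])
  then show "1 / 4 / real n \<le> integral {0..1} (psi n)" by simp
  have "integral {0..1} (psi n) \<le> integral {0..1} (\<lambda>x::real. 1 / real n)"
  proof (rule Henstock_Kurzweil_Integration.integral_le)
    show "psi n integrable_on {0..1}" by (rule psi_integrable[OF n])
    show "(\<lambda>x. 1 / real n) integrable_on {0..1::real}" by (rule Henstock_Kurzweil_Integration.integrable_const_ivl)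
  qed (rule psi_upper[OF n])
  then show "integral {0..1} (psi n) \<le> 1 / real n" by simp
qed

theorem theorem6:
  shows "(\<forall>n\<ge>1. \<forall>x::real. psi n x > 0 \<and> psi n (- x) = psi n x \<and> psi n (x + 1) = psi n x)
    \<and> (\<exists>c1 c2::real. 0 < c1 \<and> 0 < c2 \<and>
         (\<forall>n::nat\<ge>1. c1 / real n \<le> integral {0..1} (psi n) \<and> integral {0..1} (psi n) \<le> c2 / real n))
    \<and> (\<exists>C::real. \<forall>n::nat\<ge>1. \<forall>x. \<bar>psi n x\<bar> \<le> C / real n)"
proof (intro conjI allI impI)
  fix n :: nat and x :: real assume n: "n \<ge> 1"
  have "0 < 1 / (4 * real n)" using n by simp
  then show "psi n x > 0" using psi_lower[OF n, of x] by linarith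
  show "psi n (- x) = psi n x" by (rule psi_symm[OF n])
  show "psi n (x + 1) = psi n x" by (rule psi_periodic[OF n])
next
  have "\<forall>n::nat\<ge>1. 1 / 4 / real n \<le> integral {0..1} (psi n) \<and> integral {0..1} (psi n) \<le> 1 / real n"
    using int_bounds by blast
  moreover have "0 < (1/4::real)" "0 < (1::real)" by simp_all
  ultimately show "\<exists>c1 c2::real. 0 < c1 \<and> 0 < c2 \<and>
         (\<forall>n::nat\<ge>1. c1 / real n \<le> integral {0..1} (psi n) \<and> integral {0..1} (psi n) \<le> c2 / real n)"
    by blast
next
  show "\<exists>C::real. \<forall>n::nat\<ge>1. \<forall>x. \<bar>psi n x\<bar> \<le> C / real n"
  proof (intro exI[of _ 1] allI impI)
    fix n :: nat and x :: real assume n: "n \<ge> 1"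
    have "0 \<le> 1 / (4 * real n)" by simp
    then have "0 \<le> psi n x" using psi_lower[OF n, of x] by linarith
    then show "\<bar>psi n x\<bar> \<le> 1 / real n" using psi_upper[OF n, of x] by simp
  qed
qed

end
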